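(* There exist absolute constants $c,C>0$ such that the following holds. Let $G=(V,E)$ be a finite connected triangle-free non-bipartite graph satisfying $CD(0,\infty)$. Then the eigenvalues $0=\lambda_1<\lambda_2\le\cdots\le\lambda_{|V|}$ of the Laplacian $\Delta$ satisfy \[ \frac{c}{dD^2}\leq \lambda_2\leq \cdots\leq \lambda_{|V|}\leq 2-\frac{C}{dD^2}, \] where $d$ is the maximal vertex degree and $D$ the diameter of $G$.
   Context: $G$ is a finite simple connected graph with degrees $d_x$. The Laplacian is $\Delta f(x)=\frac{1}{d_x}\sum_{y\sim x}(f(y)-f(x))$, with eigenvalues defined by $-\Delta f=\lambda f$, $f\ne0$. $\Gamma(f,g)=\frac12\{\Delta(fg)-g\Delta f-f\Delta g\}$, $\Gamma_2(f,g)=\frac12\{\Delta\Gamma(f,g)-\Gamma(g,\Delta f)-\Gamma(f,\Delta g)\}$. $G$ satisfies $CD(0,\infty)$ if $\Gamma_2(f,f)(x)\ge 0$ for all $f:V\to\mathbb{R}$ and all $x\in V$. *)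

theory Defs
  imports Complex_Main
begin

definition simple_graph :: "nat set \<Rightarrow> (nat \<Rightarrow> nat \<Rightarrow> bool) \<Rightarrow> bool" where
  "simple_graph V E \<longleftrightarrow> finite V \<and> V \<noteq> {} \<and>
     (\<forall>x y. E x y \<longrightarrow> E y x) \<and> (\<forall>x. \<not> E x x) \<and>
     (\<forall>x y. E x y \<longrightarrow> x \<in> V \<and> y \<in> V)"

definition deg :: "nat set \<Rightarrow> (nat \<Rightarrow> nat \<Rightarrow> bool) \<Rightarrow> nat \<Rightarrow> nat" where
  "deg V E x = card {y \<in> V. E x y}"

definition max_deg :: "nat set \<Rightarrow> (nat \<Rightarrow> nat \<Rightarrow> bool) \<Rightarrow> nat" where
  "max_deg V E = Max (deg V E ` V)"

definition connected_graph :: "nat set \<Rightarrow> (nat \<Rightarrow> nat \<Rightarrow> bool) \<Rightarrow> bool" where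
  "connected_graph V E \<longleftrightarrow> (\<forall>x\<in>V. \<forall>y\<in>V. E\<^sup>*\<^sup>* x y)"

definition triangle_free :: "nat set \<Rightarrow> (nat \<Rightarrow> nat \<Rightarrow> bool) \<Rightarrow> bool" where
  "triangle_free V E \<longleftrightarrow> \<not> (\<exists>x y z. E x y \<and> E y z \<and> E z x)"

definition bipartite :: "nat set \<Rightarrow> (nat \<Rightarrow> nat \<Rightarrow> bool) \<Rightarrow> bool" where
  "bipartite V E \<longleftrightarrow> (\<exists>A. \<forall>x y. E x y \<longrightarrow> (x \<in> A \<longleftrightarrow> y \<notin> A))"

definition gdist :: "(nat \<Rightarrow> nat \<Rightarrow> bool) \<Rightarrow> nat \<Rightarrow> nat \<Rightarrow> nat" where
  "gdist E x y = (LEAST n. (E ^^ n) x y)"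

definition diameter :: "nat set \<Rightarrow> (nat \<Rightarrow> nat \<Rightarrow> bool) \<Rightarrow> nat" where
  "diameter V E = Max {gdist E x y | x y. x \<in> V \<and> y \<in> V}"

definition laplacian :: "nat set \<Rightarrow> (nat \<Rightarrow> nat \<Rightarrow> bool) \<Rightarrow> (nat \<Rightarrow> real) \<Rightarrow> nat \<Rightarrow> real" where
  "laplacian V E f x = (1 / real (deg V E x)) * (\<Sum>y\<in>{y \<in> V. E x y}. f y - f x)"

definition Gamma :: "nat set \<Rightarrow> (nat \<Rightarrow> nat \<Rightarrow> bool) \<Rightarrow> (nat \<Rightarrow> real) \<Rightarrow> (nat \<Rightarrow> real) \<Rightarrow> nat \<Rightarrow> real" where
  "Gamma V E f g x = (1/2) * (laplacian V E (\<lambda>z. f z * g z) x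
      - g x * laplacian V E f x - f x * laplacian V E g x)"

definition Gamma2 :: "nat set \<Rightarrow> (nat \<Rightarrow> nat \<Rightarrow> bool) \<Rightarrow> (nat \<Rightarrow> real) \<Rightarrow> (nat \<Rightarrow> real) \<Rightarrow> nat \<Rightarrow> real" where
  "Gamma2 V E f g x = (1/2) * (laplacian V E (Gamma V E f g) x
      - Gamma V E g (laplacian V E f) x - Gamma V E f (laplacian V E g) x)"

definition CD_0_inf :: "nat set \<Rightarrow> (nat \<Rightarrow> nat \<Rightarrow> bool) \<Rightarrow> bool" where
  "CD_0_inf V E \<longleftrightarrow> (\<forall>f x. x \<in> V \<longrightarrow> Gamma2 V E f f x \<ge> 0)"

definition lap_eigenpair :: "nat set \<Rightarrow> (nat \<Rightarrow> nat \<Rightarrow> bool) \<Rightarrow> real \<Rightarrow> (nat \<Rightarrow> real) \<Rightarrow> bool" where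
  "lap_eigenpair V E lam f \<longleftrightarrow> (\<exists>x\<in>V. f x \<noteq> 0) \<and>
     (\<forall>x\<in>V. - laplacian V E f x = lam * f x)"

end

theory Submission
  imports Defs
begin


lemma lap_lin: "laplacian V E (\<lambda>z. g z + c * h z) x = laplacian V E g x + c * laplacian V E h x"
proof -
  have "(\<Sum>y\<in>{y\<in>V. E x y}. g y + c * h y - (g x + c * h x)) = (\<Sum>y\<in>{y\<in>V. E x y}. g y - g x) + c * (\<Sum>y\<in>{y\<in>V. E x y}. h y - h x)"
  proof -
    have "(\<Sum>y\<in>{y\<in>V. E x y}. g y + c * h y - (g x + c * h x)) = (\<Sum>y\<in>{y\<in>V. E x y}. (g y - g x) + c * (h y - h x))"
      by (rule sum.cong) (auto simp: algebra_simps)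
    also have "\<dots> = (\<Sum>y\<in>{y\<in>V. E x y}. g y - g x) + c * (\<Sum>y\<in>{y\<in>V. E x y}. h y - h x)"
      by (simp add: sum.distrib sum_distrib_left)
    finally show ?thesis .
  qed
  then show ?thesis unfolding laplacian_def by (simp add: algebra_simps)
qed

lemma lap_cong: "(\<And>z. z = x \<or> E x z \<Longrightarrow> g z = h z) \<Longrightarrow> laplacian V E g x = laplacian V E h x"
  unfolding laplacian_def by (intro arg_cong2[where f="(*)"] refl sum.cong) auto

lemma Gamma_formula: "finite V \<Longrightarrow> Gamma V E h k x =
   (1/(2*real(deg V E x))) * (\<Sum>y\<in>{y\<in>V. E x y}. (h y - h x)*(k y - k x))"
proof -
  assume fin: "finite V"
  let ?N = "{y\<in>V. E x y}"
  have "(\<Sum>y\<in>?N. (h y - h x)*(k y - k x)) = (\<Sum>y\<in>?N. (h y * k y - h x * k x) - k x * (h y - h x) - h x * (k y - k x))"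
    by (rule sum.cong) (auto simp: algebra_simps)
  also have "\<dots> = (\<Sum>y\<in>?N. h y * k y - h x * k x) - k x * (\<Sum>y\<in>?N. h y - h x) - h x * (\<Sum>y\<in>?N. k y - k x)"
    by (simp add: sum_distrib_left right_diff_distrib sum_subtractf)
  finally have eq: "(\<Sum>y\<in>?N. (h y - h x)*(k y - k x)) = (\<Sum>y\<in>?N. h y * k y - h x * k x) - k x * (\<Sum>y\<in>?N. h y - h x) - h x * (\<Sum>y\<in>?N. k y - k x)" .
  have aux: "1/2 * (1/d * A - kk*(1/d*B) - hh*(1/d*C)) = 1/(2*d) * (A - kk*B - hh*C)" for d A B C kk hh :: real
    by (cases "d = 0") (simp_all add: field_simps)
  show ?thesis unfolding Gamma_def laplacian_def eq by (rule aux)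
qed

lemma lap_alt: "finite V \<Longrightarrow> deg V E x > 0 \<Longrightarrow>
   laplacian V E g x = (\<Sum>y\<in>{y\<in>V. E x y}. g y) / real (deg V E x) - g x"
proof -
  assume "finite V" "deg V E x > 0"
  then have "card {y\<in>V. E x y} > 0" unfolding deg_def by simp
  then have n: "real (card {y\<in>V. E x y}) \<noteq> 0" by (metis of_nat_0_less_iff less_irrefl)
  have "(\<Sum>y\<in>{y\<in>V. E x y}. g y - g x) = (\<Sum>y\<in>{y\<in>V. E x y}. g y) - real (card {y\<in>V. E x y}) * g x"
    by (simp add: sum_subtractf)
  then show ?thesis unfolding laplacian_def deg_def using n by (simp add: field_simps)
qed

lemma energy:
  assumes "finite V" "\<forall>x y. E x y \<longrightarrow> E y x"
  shows "(\<Sum>x\<in>V. real (deg V E x) * laplacian V E g x) = 0"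
proof -
  have t: "real (deg V E x) * laplacian V E g x = (\<Sum>y\<in>V. if E x y then g y else 0) - (\<Sum>y\<in>V. if E x y then g x else 0)" for x
  proof -
    have "real (deg V E x) * laplacian V E g x = (\<Sum>y\<in>{y\<in>V. E x y}. g y - g x)"
    proof (cases "deg V E x = 0")
      case True
      then have e: "{y\<in>V. E x y} = {}" using assms(1) unfolding deg_def by simp
      show ?thesis unfolding e using True by simp
    next
      case False then show ?thesis unfolding laplacian_def by simp
    qed
    also have "\<dots> = (\<Sum>y\<in>V. if E x y then g y - g x else 0)"
      using assms(1) by (simp add: sum.inter_filter)
    also have "\<dots> = (\<Sum>y\<in>V. (if E x y then g y else 0) - (if E x y then g x else 0))"
      by (rule sum.cong) auto
    finally show ?thesis by (simp add: sum_subtractf)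
  qed
  have "(\<Sum>x\<in>V. \<Sum>y\<in>V. if E x y then g y else 0) = (\<Sum>y\<in>V. \<Sum>x\<in>V. if E x y then g y else 0)"
    by (rule sum.swap)
  also have "\<dots> = (\<Sum>y\<in>V. \<Sum>x\<in>V. if E y x then g y else 0)"
    using assms(2) by (intro sum.cong refl) metis
  finally show ?thesis by (simp add: t sum_subtractf)
qed

lemma L1:
  assumes fin: "finite V" and cd: "Gamma2 V E h h x \<ge> 0"
    and hx: "laplacian V E h x = -\<kappa> * h x"
    and hn: "\<forall>z\<in>V. E x z \<longrightarrow> laplacian V E h z = -\<kappa> * h z"
  shows "1/2 * laplacian V E (Gamma V E h h) x + \<kappa> * Gamma V E h h x \<ge> 0"
proof -
  have "Gamma V E h (laplacian V E h) x = (1/(2*real(deg V E x))) * (\<Sum>y\<in>{y\<in>V. E x y}. (h y - h x)*(-\<kappa> * h y - (-\<kappa> * h x)))"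
    unfolding Gamma_formula[OF fin] using hx hn by (intro arg_cong2[where f="(*)"] refl sum.cong) auto
  also have "\<dots> = (1/(2*real(deg V E x))) * (\<Sum>y\<in>{y\<in>V. E x y}. -\<kappa> * ((h y - h x)*(h y - h x)))"
  proof -
    have "\<And>y. (h y - h x)*(-\<kappa> * h y - (-\<kappa> * h x)) = -\<kappa> * ((h y - h x)*(h y - h x))" by algebra
    then have "(\<Sum>y\<in>{y\<in>V. E x y}. (h y - h x)*(-\<kappa> * h y - (-\<kappa> * h x))) = (\<Sum>y\<in>{y\<in>V. E x y}. -\<kappa> * ((h y - h x)*(h y - h x)))" by simp
    then show ?thesis by simp
  qed
  also have "\<dots> = -\<kappa> * Gamma V E h h x"
    unfolding Gamma_formula[OF fin] sum_distrib_left[symmetric] by simp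
  finally show ?thesis using cd unfolding Gamma2_def by (simp add: algebra_simps)
qed



lemma L2:
  assumes fin: "finite V" and ne: "V \<noteq> {}"
    and hG: "\<forall>x\<in>V. 1/2 * laplacian V E G x + \<kappa> * G x \<ge> 0"
    and hF: "\<forall>x\<in>V. laplacian V E (\<lambda>z. F z * F z) x = 2 * G x - 2 * \<kappa> * (F x * F x)"
    and Gnn: "\<forall>x\<in>V. G x \<ge> 0" and kpos: "\<kappa> > 0"
    and hM: "\<forall>x\<in>V. \<bar>F x\<bar> \<le> M"
  shows "\<forall>z\<in>V. G z \<le> 4 * \<kappa> * M^2"
proof
  fix z assume z: "z \<in> V"
  define w where "w = (\<lambda>z. G z + (2*\<kappa>) * (F z * F z))"
  define x where "x = (SOME x. x \<in> V \<and> w x = Max (w ` V))"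
  have "Max (w ` V) \<in> w ` V" using Max_in[of "w ` V"] fin ne by auto
  then have "\<exists>x. x \<in> V \<and> w x = Max (w ` V)" by (metis imageE)
  then have xV: "x \<in> V" and wx: "w x = Max (w ` V)" unfolding x_def by (metis (mono_tags, lifting) someI_ex)+
  have wmax: "\<forall>y\<in>V. w y \<le> w x" using wx fin by simp
  have "laplacian V E w x \<le> 0"
  proof -
    have "(\<Sum>y\<in>{y\<in>V. E x y}. w y - w x) \<le> 0"
      by (rule sum_nonpos) (use wmax in auto)
    then show ?thesis unfolding laplacian_def by (simp add: divide_nonpos_nonneg)
  qed
  moreover have "laplacian V E w x = laplacian V E G x + (2*\<kappa>) * laplacian V E (\<lambda>z. F z * F z) x"
    unfolding w_def by (rule lap_lin)
  ultimately have "laplacian V E G x + (2*\<kappa>) * (2 * G x - 2 * \<kappa> * (F x * F x)) \<le> 0"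
    using hF xV by simp
  moreover have "laplacian V E G x \<ge> - 2 * \<kappa> * G x" using hG xV by auto
  ultimately have "2*\<kappa> * G x - 4*\<kappa>*\<kappa>*(F x * F x) \<le> 0" by (simp add: algebra_simps)
  then have "\<kappa> * (2 * G x - 4*\<kappa>*(F x * F x)) \<le> 0" by (simp add: algebra_simps)
  then have Gx: "G x \<le> 2*\<kappa>*(F x * F x)" using kpos by (simp add: mult_le_0_iff)
  have "F x * F x \<le> M^2"
  proof -
    have "\<bar>F x\<bar> * \<bar>F x\<bar> \<le> M * M" using hM xV by (meson abs_ge_zero mult_mono order_trans)
    then show ?thesis by (simp add: power2_eq_square abs_mult[symmetric])
  qed
  then have "\<kappa> * (F x * F x) \<le> \<kappa> * M^2" using kpos by (simp add: mult_left_mono)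
  then have "w x \<le> 4*\<kappa>*M^2" using Gx unfolding w_def by linarith
  moreover have "G z \<le> w z" unfolding w_def using kpos by simp
  ultimately show "G z \<le> 4 * \<kappa> * M^2" using wmax z by fastforce
qed

lemma walk_unsigned:
  assumes "\<forall>a b. E a b \<longrightarrow> \<bar>f a - f b\<bar> \<le> (s::real)"
  shows "(E ^^ n) p q \<Longrightarrow> \<bar>f p - f q\<bar> \<le> real n * s"
proof (induction n arbitrary: q)
  case 0 then show ?case by simp
next
  case (Suc n)
  then obtain r where r: "(E ^^ n) p r" "E r q" by auto
  have "\<bar>f p - f q\<bar> \<le> \<bar>f p - f r\<bar> + \<bar>f r - f q\<bar>" by simp
  also have "\<dots> \<le> real n * s + s" using Suc.IH[OF r(1)] assms r(2) by (meson add_mono)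
  finally show ?case by (simp add: algebra_simps)
qed

lemma walk_signed:
  assumes "\<forall>a b. E a b \<longrightarrow> \<bar>f a + f b\<bar> \<le> (s::real)"
  shows "(E ^^ n) p q \<Longrightarrow> \<bar>f p - (-1)^n * f q\<bar> \<le> real n * s"
proof (induction n arbitrary: q)
  case 0 then show ?case by simp
next
  case (Suc n)
  then obtain r where r: "(E ^^ n) p r" "E r q" by auto
  have e: "f p - (-1)^(Suc n) * f q = (f p - (-1)^n * f r) + (-1)^n * (f r + f q)"
    by (simp add: algebra_simps)
  have a: "\<bar>(-1)^n * (f r + f q)\<bar> = \<bar>f r + f q\<bar>" by (simp add: abs_mult)
  have "\<bar>f p - (-1)^(Suc n) * f q\<bar> \<le> \<bar>f p - (-1)^n * f r\<bar> + \<bar>f r + f q\<bar>"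
    unfolding e using abs_triangle_ineq a by metis
  also have "\<dots> \<le> real n * s + s" using Suc.IH[OF r(1)] assms r(2) by (meson add_mono)
  finally show ?case by (simp add: algebra_simps)
qed



definition Gs :: "nat set \<Rightarrow> (nat \<Rightarrow> nat \<Rightarrow> bool) \<Rightarrow> (nat \<Rightarrow> real) \<Rightarrow> nat \<Rightarrow> real" where
  "Gs V E f z = 1/(2*real (deg V E z)) * (\<Sum>y\<in>{y\<in>V. E z y}. (f y + f z) * (f y + f z))"

lemma sum_nbr_eig:
  assumes fin: "finite V" and dp: "deg V E x > 0" and ev: "- laplacian V E f x = lam * f x"
  shows "(\<Sum>y\<in>{y\<in>V. E x y}. f y) = real (deg V E x) * (1 - lam) * f x"
proof -
  have "(\<Sum>y\<in>{y\<in>V. E x y}. f y) / real (deg V E x) - f x = - lam * f x"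
    using ev lap_alt[OF fin dp] by simp
  then show ?thesis using dp by (simp add: field_simps)
qed

lemma signed_identity:
  assumes fin: "finite V" and dp: "deg V E x > 0" and ev: "- laplacian V E f x = lam * f x"
  shows "laplacian V E (\<lambda>z. f z * f z) x = 2 * Gs V E f x - 2 * (2 - lam) * (f x * f x)"
proof -
  let ?N = "{y\<in>V. E x y}"
  let ?d = "real (deg V E x)"
  have s1: "(\<Sum>y\<in>?N. f y) = ?d * (1 - lam) * f x" by (rule sum_nbr_eig[OF fin dp ev])
  have "(\<Sum>y\<in>?N. (f y + f x) * (f y + f x)) = (\<Sum>y\<in>?N. f y * f y + 2 * f x * f y + f x * f x)"
    by (rule sum.cong) (auto simp: algebra_simps)
  also have "\<dots> = (\<Sum>y\<in>?N. f y * f y) + 2 * f x * (\<Sum>y\<in>?N. f y) + ?d * (f x * f x)"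
    by (simp add: sum.distrib sum_distrib_left deg_def)
  finally have s2: "(\<Sum>y\<in>?N. (f y + f x) * (f y + f x)) = (\<Sum>y\<in>?N. f y * f y) + 2 * f x * (?d * (1 - lam) * f x) + ?d * (f x * f x)"
    unfolding s1 .
  have dz: "?d > 0" using dp by simp
  show ?thesis unfolding lap_alt[OF fin dp] Gs_def s2 using dz by (simp add: field_simps)
qed

lemma signed_L1:
  assumes sg: "simple_graph V E" and tf: "triangle_free V E" and cd: "CD_0_inf V E"
    and ev: "\<forall>x\<in>V. - laplacian V E f x = lam * f x"
    and dp: "\<forall>x\<in>V. deg V E x > 0" and xV: "x \<in> V"
  shows "1/2 * laplacian V E (Gs V E f) x + (2 - lam) * Gs V E f x \<ge> 0"
proof -
  have fin: "finite V" and sym: "\<And>a b. E a b \<Longrightarrow> E b a" and irr: "\<And>a. \<not> E a a"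
    and inV: "\<And>a b. E a b \<Longrightarrow> a \<in> V \<and> b \<in> V"
    using sg unfolding simple_graph_def by auto
  have notri: "\<And>a b c. E a b \<Longrightarrow> E b c \<Longrightarrow> E c a \<Longrightarrow> False"
    using tf unfolding triangle_free_def by blast
  define g where "g = (\<lambda>z. if z = x then f x else if E x z then - f z else f z)"
  have gy: "g y = - f y" if "E x y" for y using that irr unfolding g_def by auto
  have gz: "g z = f z" if "E x y" "E y z" for y z
    using that notri[of x y z] sym unfolding g_def by auto
  let ?mu = "2 - lam"
  have lapx: "laplacian V E g x = - ?mu * g x"
  proof -
    have "(\<Sum>y\<in>{y\<in>V. E x y}. g y) = - (\<Sum>y\<in>{y\<in>V. E x y}. f y)"
      by (simp add: gy sum_negf[symmetric])
    moreover have "g x = f x" by (simp add: g_def)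
    moreover have "real (deg V E x) > 0" using dp xV by simp
    ultimately show ?thesis unfolding lap_alt[OF fin dp[rule_format, OF xV]] sum_nbr_eig[OF fin dp[rule_format, OF xV] ev[rule_format, OF xV]]
      by (simp add: field_simps)
  qed
  have lapy: "laplacian V E g y = - ?mu * g y" if yV: "y \<in> V" and xy: "E x y" for y
  proof -
    have "(\<Sum>z\<in>{z\<in>V. E y z}. g z) = (\<Sum>z\<in>{z\<in>V. E y z}. f z)"
      by (rule sum.cong) (auto simp: gz[OF xy])
    moreover have "real (deg V E y) > 0" using dp yV by simp
    ultimately show ?thesis unfolding lap_alt[OF fin dp[rule_format, OF yV]] sum_nbr_eig[OF fin dp[rule_format, OF yV] ev[rule_format, OF yV]]
      by (simp add: gy[OF xy] field_simps)
  qed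
  have L: "1/2 * laplacian V E (Gamma V E g g) x + ?mu * Gamma V E g g x \<ge> 0"
    by (rule L1[OF fin]) (use cd xV lapx lapy in \<open>auto simp: CD_0_inf_def\<close>)
  have gxx: "g x = f x" by (simp add: g_def)
  have pt: "(g y - g x)*(g y - g x) = (f y + f x)*(f y + f x)" if "E x y" for y
  proof -
    have "g y - g x = -(f y + f x)" using gy[OF that] gxx by simp
    then show ?thesis by (metis minus_mult_minus)
  qed
  have Gx: "Gamma V E g g x = Gs V E f x"
    unfolding Gamma_formula[OF fin] Gs_def
    by (rule arg_cong2[where f="(*)"], rule refl, rule sum.cong, rule refl, rule pt, simp)
  have Gy: "Gamma V E g g y = Gs V E f y" if xy: "E x y" for y
    unfolding Gamma_formula[OF fin] Gs_def
    by (intro arg_cong2[where f="(*)"] refl sum.cong) (auto simp: gy[OF xy] gz[OF xy])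
  have "laplacian V E (Gamma V E g g) x = laplacian V E (Gs V E f) x"
    by (rule lap_cong) (use Gx Gy in auto)
  then show ?thesis using L Gx by simp
qed



lemma fin_argmax:
  fixes \<phi> :: "'a \<Rightarrow> real"
  assumes "finite S" "S \<noteq> {}"
  shows "\<exists>x\<in>S. \<forall>y\<in>S. \<phi> y \<le> \<phi> x"
proof -
  have "Max (\<phi> ` S) \<in> \<phi> ` S" using Max_in assms by auto
  then obtain x where "x \<in> S" "\<phi> x = Max (\<phi> ` S)" by (metis imageE)
  moreover have "\<forall>y\<in>S. \<phi> y \<le> Max (\<phi> ` S)" using assms by simp
  ultimately show ?thesis by metis
qed

lemma edge_argmax:
  fixes \<phi> :: "nat \<Rightarrow> nat \<Rightarrow> real"
  assumes sg: "simple_graph V E" and e: "E u0 v0"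
  shows "\<exists>a b. E a b \<and> (\<forall>u v. E u v \<longrightarrow> \<phi> u v \<le> \<phi> a b)"
proof -
  let ?S = "{p. fst p \<in> V \<and> snd p \<in> V \<and> E (fst p) (snd p)}"
  have fin: "finite V" and inV: "\<And>a b. E a b \<Longrightarrow> a \<in> V \<and> b \<in> V"
    using sg unfolding simple_graph_def by auto
  have "?S \<subseteq> V \<times> V" by auto
  then have "finite ?S" using fin by (meson finite_SigmaI rev_finite_subset)
  moreover have "(u0, v0) \<in> ?S" using e inV by auto
  ultimately obtain p where p: "p \<in> ?S" "\<forall>q\<in>?S. \<phi> (fst q) (snd q) \<le> \<phi> (fst p) (snd p)"
    using fin_argmax[of ?S "\<lambda>p. \<phi> (fst p) (snd p)"] by blast
  show ?thesis
  proof (intro exI conjI allI impI)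
    show "E (fst p) (snd p)" using p by auto
    fix u v assume "E u v"
    then have "(u, v) \<in> ?S" using inV by auto
    then show "\<phi> u v \<le> \<phi> (fst p) (snd p)" using p(2) by fastforce
  qed
qed

lemma prelim:
  assumes sg: "simple_graph V E" and conn: "connected_graph V E" and nb: "\<not> bipartite V E"
  shows "\<exists>u v. E u v"
    and "\<forall>x\<in>V. deg V E x > 0"
    and "\<forall>x\<in>V. deg V E x \<le> max_deg V E"
    and "\<forall>x\<in>V. \<forall>y\<in>V. (E ^^ gdist E x y) x y \<and> gdist E x y \<le> diameter V E"
    and "diameter V E \<ge> 1"
proof -
  have fin: "finite V" and sym: "\<And>a b. E a b \<Longrightarrow> E b a" and irr: "\<And>a. \<not> E a a"
    and inV: "\<And>a b. E a b \<Longrightarrow> a \<in> V \<and> b \<in> V"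
    using sg unfolding simple_graph_def by auto
  show ex: "\<exists>u v. E u v"
  proof (rule ccontr)
    assume "\<not> (\<exists>u v. E u v)"
    then have "\<forall>x y. E x y \<longrightarrow> (x \<in> {} \<longleftrightarrow> y \<notin> {})" by blast
    then show False using nb unfolding bipartite_def by blast
  qed
  then obtain u v where uv: "E u v" by blast
  show "\<forall>x\<in>V. deg V E x > 0"
  proof
    fix x assume xV: "x \<in> V"
    have "\<exists>z. E x z"
    proof (cases "x = u")
      case True then show ?thesis using uv by blast
    next
      case False
      have "E\<^sup>*\<^sup>* x u" using conn xV inV uv unfolding connected_graph_def by blast
      then show ?thesis using False by (metis converse_rtranclpE)
    qed
    then obtain z where "E x z" by blast
    then have "z \<in> {y\<in>V. E x y}" using inV by auto
    moreover have "finite {y\<in>V. E x y}" using fin by simp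
    ultimately show "deg V E x > 0" unfolding deg_def using card_gt_0_iff by blast
  qed
  show "\<forall>x\<in>V. deg V E x \<le> max_deg V E"
    unfolding max_deg_def using fin by simp
  have W: "(E ^^ gdist E x y) x y" if "x \<in> V" "y \<in> V" for x y
  proof -
    have "E\<^sup>*\<^sup>* x y" using conn that unfolding connected_graph_def by blast
    then obtain n where "(E ^^ n) x y" using rtranclp_imp_relpowp by metis
    then show ?thesis unfolding gdist_def by (rule LeastI)
  qed
  have fS: "finite {gdist E x y | x y. x \<in> V \<and> y \<in> V}"
  proof -
    have "{gdist E x y | x y. x \<in> V \<and> y \<in> V} = (\<lambda>p. gdist E (fst p) (snd p)) ` (V \<times> V)" by force
    then show ?thesis using fin by simp
  qed
  have Dle: "gdist E x y \<le> diameter V E" if "x \<in> V" "y \<in> V" for x y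
    unfolding diameter_def using that fS by (intro Max_ge) auto
  show "\<forall>x\<in>V. \<forall>y\<in>V. (E ^^ gdist E x y) x y \<and> gdist E x y \<le> diameter V E"
    using W Dle by blast
  have "gdist E u v \<noteq> 0"
  proof
    assume "gdist E u v = 0"
    then have "(E ^^ 0) u v" using W[of u v] inV uv by metis
    then show False using uv irr by simp
  qed
  then show "diameter V E \<ge> 1" using Dle[of u v] inV uv by fastforce
qed



lemma Gamma_nonneg: "finite V \<Longrightarrow> Gamma V E f f x \<ge> 0"
  unfolding Gamma_formula by (rule mult_nonneg_nonneg, simp, rule sum_nonneg, simp)

lemma Gs_nonneg: "Gs V E f x \<ge> 0"
  unfolding Gs_def by (rule mult_nonneg_nonneg, simp, rule sum_nonneg, simp)

lemma lower:
  assumes sg: "simple_graph V E" and conn: "connected_graph V E" and cd: "CD_0_inf V E"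
    and nb: "\<not> bipartite V E"
    and ev: "\<forall>x\<in>V. - laplacian V E f x = lam * f x"
    and nc: "\<exists>x\<in>V. \<exists>y\<in>V. f x \<noteq> f y"
  shows "1 / (8 * real (max_deg V E) * real (diameter V E) ^ 2) \<le> lam"
proof -
  have fin: "finite V" and ne: "V \<noteq> {}" and sym: "\<And>a b. E a b \<Longrightarrow> E b a"
    and inV: "\<And>a b. E a b \<Longrightarrow> a \<in> V \<and> b \<in> V"
    using sg unfolding simple_graph_def by auto
  note P = prelim[OF sg conn nb]
  define d where "d = real (max_deg V E)"
  define D where "D = real (diameter V E)"
  have dp: "\<forall>x\<in>V. deg V E x > 0" using P(2) .
  have lapf: "\<And>z. z \<in> V \<Longrightarrow> laplacian V E f z = - lam * f z" using ev by force
  have dle: "\<And>x. x \<in> V \<Longrightarrow> real (deg V E x) \<le> d" using P(3) unfolding d_def by simp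
  have D1: "D \<ge> 1" using P(5) unfolding D_def by simp
  have d1: "d \<ge> 1"
  proof -
    obtain x where x: "x \<in> V" using ne by blast
    then have "real (deg V E x) \<ge> 1" using dp by (simp add: Suc_le_eq)
    then show ?thesis using dle[OF x] by linarith
  qed
  have "\<exists>a b. E a b \<and> f a \<noteq> f b"
  proof (rule ccontr)
    assume "\<not> ?thesis"
    then have eq: "\<And>a b. E a b \<Longrightarrow> f a = f b" by blast
    have "E\<^sup>*\<^sup>* x y \<Longrightarrow> f x = f y" for x y
      by (induction rule: rtranclp_induct) (simp_all add: eq)
    then show False using nc conn unfolding connected_graph_def by blast
  qed
  then obtain a0 b0 where ab0: "E a0 b0" "f a0 \<noteq> f b0" by blast
  let ?G = "Gamma V E f f"
  have Gnn: "\<forall>x\<in>V. ?G x \<ge> 0" using Gamma_nonneg[OF fin] by blast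
  have Glow: "?G a \<ge> (f b - f a)^2 / (2 * d)" if "E a b" for a b
  proof -
    have aV: "a \<in> V" and bV: "b \<in> V" using inV that by auto
    have "(f b - f a)^2 \<le> (\<Sum>y\<in>{y\<in>V. E a y}. (f y - f a) * (f y - f a))"
      using fin bV that by (subst power2_eq_square, intro member_le_sum) auto
    moreover have "0 \<le> (\<Sum>y\<in>{y\<in>V. E a y}. (f y - f a) * (f y - f a))" by (rule sum_nonneg) simp
    moreover have "real (deg V E a) > 0" using dp aV by simp
    moreover have "real (deg V E a) \<le> d" using dle aV .
    ultimately have "(f b - f a)^2 / (2 * d) \<le> (\<Sum>y\<in>{y\<in>V. E a y}. (f y - f a) * (f y - f a)) / (2 * real (deg V E a))"
      by (intro frac_le) auto
    then show ?thesis unfolding Gamma_formula[OF fin] by simp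
  qed
  have lapff: "laplacian V E (\<lambda>z. f z * f z) x = 2 * ?G x - 2 * lam * (f x * f x)" if "x \<in> V" for x
    using lapf[OF that] unfolding Gamma_def by (simp add: algebra_simps)
  have lampos: "lam > 0"
  proof -
    have "(\<Sum>x\<in>V. real (deg V E x) * laplacian V E (\<lambda>z. f z * f z) x) = 0"
      using energy[OF fin] sym by blast
    moreover have "(\<Sum>x\<in>V. real (deg V E x) * laplacian V E (\<lambda>z. f z * f z) x) = (\<Sum>x\<in>V. real (deg V E x) * (2 * ?G x - 2 * lam * (f x * f x)))"
      by (rule sum.cong) (simp_all add: lapff)
    ultimately have "(\<Sum>x\<in>V. real (deg V E x) * (2 * ?G x - 2 * lam * (f x * f x))) = 0" by simp
    then have e: "2 * (\<Sum>x\<in>V. real (deg V E x) * ?G x) = 2 * lam * (\<Sum>x\<in>V. real (deg V E x) * (f x * f x))"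
      by (simp add: algebra_simps sum_subtractf sum_distrib_left)
    have "real (deg V E a0) * ?G a0 > 0"
    proof -
      have "(f b0 - f a0)^2 > 0" using ab0 by simp
      moreover have "2 * d > 0" using d1 by simp
      ultimately have "(f b0 - f a0)^2 / (2 * d) > 0" by (rule divide_pos_pos)
      then have "?G a0 > 0" using Glow[OF ab0(1)] by linarith
      then show ?thesis using dp inV ab0 by simp
    qed
    then have "(\<Sum>x\<in>V. real (deg V E x) * ?G x) > 0"
      using fin inV ab0 Gnn by (intro sum_pos2[of V a0]) auto
    moreover have "(\<Sum>x\<in>V. real (deg V E x) * (f x * f x)) \<ge> 0" by (intro sum_nonneg) auto
    ultimately show ?thesis using e
    proof -
      assume A: "(\<Sum>x\<in>V. real (deg V E x) * ?G x) > 0" "(\<Sum>x\<in>V. real (deg V E x) * (f x * f x)) \<ge> 0"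
      show "lam > 0"
      proof (rule ccontr)
        assume "\<not> lam > 0"
        then have "lam * (\<Sum>x\<in>V. real (deg V E x) * (f x * f x)) \<le> 0" using A(2) by (simp add: mult_nonpos_nonneg)
        then show False using A(1) e by linarith
      qed
    qed
  qed
  have sumf: "(\<Sum>x\<in>V. real (deg V E x) * f x) = 0"
  proof -
    have "(\<Sum>x\<in>V. real (deg V E x) * laplacian V E f x) = 0"
      using energy[OF fin] sym by blast
    moreover have "(\<Sum>x\<in>V. real (deg V E x) * laplacian V E f x) = (\<Sum>x\<in>V. real (deg V E x) * (- lam * f x))"
      by (rule sum.cong) (simp_all add: lapf)
    ultimately have "(\<Sum>x\<in>V. real (deg V E x) * (- lam * f x)) = 0" by simp
    then have "- lam * (\<Sum>x\<in>V. real (deg V E x) * f x) = 0"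
      by (simp add: sum_distrib_left algebra_simps)
    then show ?thesis using lampos by simp
  qed
  obtain x0 where x0: "x0 \<in> V" "\<forall>y\<in>V. \<bar>f y\<bar> \<le> \<bar>f x0\<bar>"
    using fin_argmax[OF fin ne, of "\<lambda>y. \<bar>f y\<bar>"] by blast
  define M where "M = \<bar>f x0\<bar>"
  have Mpos: "M > 0" using nc x0 unfolding M_def by fastforce
  have "\<exists>y\<in>V. \<bar>f x0 - f y\<bar> \<ge> M"
  proof (rule ccontr)
    assume "\<not> ?thesis"
    then have lt: "\<forall>y\<in>V. \<bar>f x0 - f y\<bar> < M" by auto
    show False
    proof (cases "f x0 \<ge> 0")
      case True
      then have "\<forall>y\<in>V. real (deg V E y) * f y > 0" using lt dp unfolding M_def by auto
      then have "(\<Sum>x\<in>V. real (deg V E x) * f x) > 0" using fin ne by (intro sum_pos) auto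
      then show False using sumf by simp
    next
      case False
      then have neg: "\<forall>y\<in>V. f y < 0" using lt unfolding M_def by (auto simp: abs_less_iff)
      have "\<forall>y\<in>V. real (deg V E y) * (- f y) > 0"
      proof
        fix y assume "y \<in> V"
        then show "real (deg V E y) * (- f y) > 0" using neg dp by (intro mult_pos_pos) auto
      qed
      then have "(\<Sum>x\<in>V. real (deg V E x) * (- f x)) > 0" using fin ne by (intro sum_pos) auto
      then show False using sumf by (simp add: sum_negf)
    qed
  qed
  then obtain y where y: "y \<in> V" "\<bar>f x0 - f y\<bar> \<ge> M" by blast
  obtain a b where ab: "E a b" and abmax: "\<forall>u v. E u v \<longrightarrow> \<bar>f u - f v\<bar> \<le> \<bar>f a - f b\<bar>"
    using edge_argmax[OF sg ab0(1), of "\<lambda>u v. \<bar>f u - f v\<bar>"] by blast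
  define m where "m = \<bar>f a - f b\<bar>"
  have "\<bar>f x0 - f y\<bar> \<le> real (gdist E x0 y) * m"
    using walk_unsigned[of E f m] abmax P(4) x0(1) y(1) unfolding m_def by blast
  also have "\<dots> \<le> D * m" using P(4) x0(1) y(1) unfolding D_def m_def
    by (intro mult_right_mono) auto
  finally have Mm: "M \<le> D * m" using y(2) by simp
  have aV: "a \<in> V" using inV ab by auto
  have hG: "\<forall>x\<in>V. 1/2 * laplacian V E ?G x + lam * ?G x \<ge> 0"
  proof
    fix x assume xV: "x \<in> V"
    have "Gamma2 V E f f x \<ge> 0" using cd xV unfolding CD_0_inf_def by blast
    then show "1/2 * laplacian V E ?G x + lam * ?G x \<ge> 0"
      by (rule L1[OF fin]) (use lapf xV in blast)+
  qed
  have hM: "\<forall>x\<in>V. \<bar>f x\<bar> \<le> M" using x0 unfolding M_def by blast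
  have Gup: "?G a \<le> 4 * lam * M^2"
    using L2[OF fin ne hG _ Gnn lampos hM] lapff aV by blast
  have "(f b - f a)^2 = m^2" unfolding m_def power2_abs by (rule power2_commute)
  then have "m^2 / (2*d) \<le> ?G a" using Glow[OF ab] by simp
  then have "m^2 / (2*d) \<le> 4 * lam * M^2" using Gup by linarith
  then have m2: "m^2 \<le> 8 * d * lam * M^2" using d1 by (simp add: field_simps)
  have "M^2 \<le> (D * m)^2" using Mm Mpos by (intro power_mono) auto
  also have "\<dots> = D^2 * m^2" by (simp add: power_mult_distrib)
  also have "\<dots> \<le> D^2 * (8 * d * lam * M^2)" using m2 by (intro mult_left_mono) auto
  finally have "M^2 * 1 \<le> M^2 * (8 * d * D^2 * lam)" by (simp add: algebra_simps)
  then have "1 \<le> 8 * d * D^2 * lam" using Mpos by (simp add: mult_le_cancel_left)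
  then show ?thesis using d1 D1 unfolding d_def[symmetric] D_def[symmetric] by (simp add: field_simps)
qed



lemma upper:
  assumes sg: "simple_graph V E" and conn: "connected_graph V E" and tf: "triangle_free V E"
    and cd: "CD_0_inf V E" and nb: "\<not> bipartite V E"
    and ev: "\<forall>x\<in>V. - laplacian V E f x = lam * f x"
    and nz: "\<exists>x\<in>V. f x \<noteq> 0"
  shows "1 / (18 * real (max_deg V E) * real (diameter V E) ^ 2) \<le> 2 - lam"
proof -
  have fin: "finite V" and ne: "V \<noteq> {}" and sym: "\<And>a b. E a b \<Longrightarrow> E b a"
    and inV: "\<And>a b. E a b \<Longrightarrow> a \<in> V \<and> b \<in> V"
    using sg unfolding simple_graph_def by auto
  note P = prelim[OF sg conn nb]
  define d where "d = real (max_deg V E)"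
  define D where "D = real (diameter V E)"
  define mu where "mu = 2 - lam"
  have dp: "\<forall>x\<in>V. deg V E x > 0" using P(2) .
  have dle: "\<And>x. x \<in> V \<Longrightarrow> real (deg V E x) \<le> d" using P(3) unfolding d_def by simp
  have D1: "D \<ge> 1" using P(5) unfolding D_def by simp
  have d1: "d \<ge> 1"
  proof -
    obtain x where x: "x \<in> V" using ne by blast
    then have "real (deg V E x) \<ge> 1" using dp by (simp add: Suc_le_eq)
    then show ?thesis using dle[OF x] by linarith
  qed
  let ?G = "Gs V E f"
  have Gnn: "\<forall>x\<in>V. ?G x \<ge> 0" using Gs_nonneg by blast
  have Glow: "?G a \<ge> (f b + f a)^2 / (2 * d)" if "E a b" for a b
  proof -
    have aV: "a \<in> V" and bV: "b \<in> V" using inV that by auto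
    have "(f b + f a)^2 \<le> (\<Sum>y\<in>{y\<in>V. E a y}. (f y + f a) * (f y + f a))"
      using fin bV that by (subst power2_eq_square, intro member_le_sum) auto
    moreover have "0 \<le> (\<Sum>y\<in>{y\<in>V. E a y}. (f y + f a) * (f y + f a))" by (rule sum_nonneg) simp
    moreover have "real (deg V E a) > 0" using dp aV by simp
    moreover have "real (deg V E a) \<le> d" using dle aV .
    ultimately have "(f b + f a)^2 / (2 * d) \<le> (\<Sum>y\<in>{y\<in>V. E a y}. (f y + f a) * (f y + f a)) / (2 * real (deg V E a))"
      by (intro frac_le) auto
    then show ?thesis unfolding Gs_def by simp
  qed
  have lapff: "laplacian V E (\<lambda>z. f z * f z) x = 2 * ?G x - 2 * mu * (f x * f x)" if "x \<in> V" for x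
    unfolding mu_def using signed_identity[OF fin] dp ev that by blast
  have hG: "\<forall>x\<in>V. 1/2 * laplacian V E ?G x + mu * ?G x \<ge> 0"
    unfolding mu_def using signed_L1[OF sg tf cd ev dp] by blast
  obtain x0 where x0: "x0 \<in> V" "\<forall>y\<in>V. \<bar>f y\<bar> \<le> \<bar>f x0\<bar>"
    using fin_argmax[OF fin ne, of "\<lambda>y. \<bar>f y\<bar>"] by blast
  define M where "M = \<bar>f x0\<bar>"
  have Mpos: "M > 0" using nz x0 unfolding M_def by fastforce
  have hM: "\<forall>x\<in>V. \<bar>f x\<bar> \<le> M" using x0 unfolding M_def by blast
  \<comment> \<open>odd closed walk\<close>
  define A where "A = {z. even (gdist E x0 z)}"
  obtain u v where uv: "E u v" and par: "u \<in> A \<longleftrightarrow> v \<in> A"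
    using nb unfolding bipartite_def by blast
  have uV: "u \<in> V" and vV: "v \<in> V" using inV uv by auto
  define ka where "ka = gdist E x0 u"
  define kb where "kb = gdist E x0 v"
  have sgn: "((-1::real) ^ ka) = (-1) ^ kb" using par unfolding A_def ka_def kb_def
    by (cases "even ka") (auto simp: ka_def kb_def)
  obtain a b where ab: "E a b" and abmax: "\<forall>u v. E u v \<longrightarrow> \<bar>f u + f v\<bar> \<le> \<bar>f a + f b\<bar>"
    using edge_argmax[OF sg uv, of "\<lambda>u v. \<bar>f u + f v\<bar>"] by blast
  define m where "m = \<bar>f a + f b\<bar>"
  have w1: "\<bar>f x0 - (-1)^ka * f u\<bar> \<le> real ka * m"
    using walk_signed[of E f m] abmax P(4) x0(1) uV unfolding m_def ka_def by blast
  have w2: "\<bar>f x0 - (-1)^ka * f v\<bar> \<le> real kb * m"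
    using walk_signed[of E f m] abmax P(4) x0(1) vV unfolding m_def kb_def sgn by blast
  have w3: "\<bar>f u + f v\<bar> \<le> m" using abmax uv unfolding m_def by blast
  have ide: "2 * f x0 = (f x0 - (-1)^ka * f u) + (-1)^ka * (f u + f v) + (f x0 - (-1)^ka * f v)"
    by (simp add: algebra_simps)
  have "2 * M = \<bar>2 * f x0\<bar>" unfolding M_def by simp
  also have "\<dots> \<le> \<bar>f x0 - (-1)^ka * f u\<bar> + \<bar>(-1)^ka * (f u + f v)\<bar> + \<bar>f x0 - (-1)^ka * f v\<bar>"
    unfolding ide by (rule order_trans[OF abs_triangle_ineq add_right_mono[OF abs_triangle_ineq]])
  also have "\<dots> = \<bar>f x0 - (-1)^ka * f u\<bar> + \<bar>f u + f v\<bar> + \<bar>f x0 - (-1)^ka * f v\<bar>"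
    by (simp add: abs_mult)
  also have "\<dots> \<le> real ka * m + m + real kb * m" using w1 w2 w3 by linarith
  also have "\<dots> = (real ka + real kb + 1) * m" by (simp add: algebra_simps)
  also have "\<dots> \<le> (3 * D) * m"
  proof (rule mult_right_mono)
    have "ka \<le> diameter V E" "kb \<le> diameter V E" using P(4) x0(1) uV vV unfolding ka_def kb_def by auto
    then have "real ka \<le> D" "real kb \<le> D" unfolding D_def by auto
    then show "real ka + real kb + 1 \<le> 3 * D" using D1 by linarith
    show "0 \<le> m" unfolding m_def by simp
  qed
  finally have Mm: "2 * M \<le> 3 * D * m" .
  have aV: "a \<in> V" using inV ab by auto
  have m2e: "(f b + f a)^2 = m^2" unfolding m_def power2_abs by (simp add: add.commute)
  have mpos: "m > 0" using Mm Mpos D1 by (smt (verit) mult_nonneg_nonpos)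
  have mupos: "mu > 0"
  proof -
    have "(\<Sum>x\<in>V. real (deg V E x) * laplacian V E (\<lambda>z. f z * f z) x) = 0"
      using energy[OF fin] sym by blast
    moreover have "(\<Sum>x\<in>V. real (deg V E x) * laplacian V E (\<lambda>z. f z * f z) x) = (\<Sum>x\<in>V. real (deg V E x) * (2 * ?G x - 2 * mu * (f x * f x)))"
      by (rule sum.cong) (simp_all add: lapff)
    ultimately have "(\<Sum>x\<in>V. real (deg V E x) * (2 * ?G x - 2 * mu * (f x * f x))) = 0" by simp
    then have e: "2 * (\<Sum>x\<in>V. real (deg V E x) * ?G x) = 2 * mu * (\<Sum>x\<in>V. real (deg V E x) * (f x * f x))"
      by (simp add: algebra_simps sum_subtractf sum_distrib_left)
    have "real (deg V E a) * ?G a > 0"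
    proof -
      have "m^2 > 0" using mpos by simp
      moreover have "2 * d > 0" using d1 by simp
      ultimately have "m^2 / (2 * d) > 0" by (rule divide_pos_pos)
      then have "?G a > 0" using Glow[OF ab] unfolding m2e by linarith
      then show ?thesis using dp aV by simp
    qed
    then have S1: "(\<Sum>x\<in>V. real (deg V E x) * ?G x) > 0"
      using fin aV Gnn by (intro sum_pos2[of V a]) auto
    have S2: "(\<Sum>x\<in>V. real (deg V E x) * (f x * f x)) \<ge> 0" by (intro sum_nonneg) auto
    show "mu > 0"
    proof (rule ccontr)
      assume "\<not> mu > 0"
      then have "mu * (\<Sum>x\<in>V. real (deg V E x) * (f x * f x)) \<le> 0" using S2 by (simp add: mult_nonpos_nonneg)
      then show False using S1 e by linarith
    qed
  qed
  have Gup: "?G a \<le> 4 * mu * M^2"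
    using L2[OF fin ne hG _ Gnn mupos hM] lapff aV by blast
  have "m^2 / (2*d) \<le> ?G a" using Glow[OF ab] m2e by simp
  then have "m^2 / (2*d) \<le> 4 * mu * M^2" using Gup by linarith
  then have m2: "m^2 \<le> 8 * d * mu * M^2" using d1 by (simp add: field_simps)
  have "4 * M^2 = (2 * M)^2" by (simp add: power_mult_distrib)
  also have "\<dots> \<le> (3 * D * m)^2" using Mm Mpos by (intro power_mono) auto
  also have "\<dots> = 9 * D^2 * m^2" by (simp add: power_mult_distrib)
  also have "\<dots> \<le> 9 * D^2 * (8 * d * mu * M^2)" using m2 by (intro mult_left_mono) auto
  finally have "M^2 * 4 \<le> M^2 * (72 * d * D^2 * mu)" by (simp add: algebra_simps)
  then have "4 \<le> 72 * d * D^2 * mu" using Mpos by (simp add: mult_le_cancel_left)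
  then have "1 \<le> 18 * d * D^2 * mu" by (simp add: mult_ac)
  then show ?thesis using d1 D1 unfolding d_def[symmetric] D_def[symmetric] mu_def[symmetric] by (simp add: field_simps)
qed

lemma main_lemma:
  assumes H: "simple_graph V E \<and> connected_graph V E \<and> triangle_free V E \<and> \<not> bipartite V E \<and> CD_0_inf V E"
    and ep: "lap_eigenpair V E lam f"
  shows "lam \<le> 2 - (1/18) / (real (max_deg V E) * real (diameter V E) ^ 2) \<and>
          ((\<exists>x\<in>V. \<exists>y\<in>V. f x \<noteq> f y) \<longrightarrow>
             (1/8) / (real (max_deg V E) * real (diameter V E) ^ 2) \<le> lam)"
proof -
  have ev: "\<forall>x\<in>V. - laplacian V E f x = lam * f x" and nz: "\<exists>x\<in>V. f x \<noteq> 0"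
    using ep unfolding lap_eigenpair_def by auto
  have "1 / (18 * real (max_deg V E) * real (diameter V E) ^ 2) \<le> 2 - lam"
    using upper[OF _ _ _ _ _ ev nz] H by blast
  then have A: "lam \<le> 2 - (1/18) / (real (max_deg V E) * real (diameter V E) ^ 2)"
    by (simp add: divide_divide_eq_left mult.assoc)
  have B: "(1/8) / (real (max_deg V E) * real (diameter V E) ^ 2) \<le> lam"
    if nc: "\<exists>x\<in>V. \<exists>y\<in>V. f x \<noteq> f y"
  proof -
    have "1 / (8 * real (max_deg V E) * real (diameter V E) ^ 2) \<le> lam"
      using lower[OF _ _ _ _ ev nc] H by blast
    then show ?thesis by (simp add: divide_divide_eq_left mult.assoc)
  qed
  show ?thesis using A B by blast
qed

theorem theorem1p3:
  shows "\<exists>c C :: real. c > 0 \<and> C > 0 \<and>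
    (\<forall>(V :: nat set) (E :: nat \<Rightarrow> nat \<Rightarrow> bool).
       simple_graph V E \<and> connected_graph V E \<and> triangle_free V E \<and>
       \<not> bipartite V E \<and> CD_0_inf V E \<longrightarrow>
       (\<forall>lam f. lap_eigenpair V E lam f \<longrightarrow>
          lam \<le> 2 - C / (real (max_deg V E) * real (diameter V E) ^ 2) \<and>
          ((\<exists>x\<in>V. \<exists>y\<in>V. f x \<noteq> f y) \<longrightarrow>
             c / (real (max_deg V E) * real (diameter V E) ^ 2) \<le> lam)))"
  apply (rule exI[of _ "1/8"], rule exI[of _ "1/18"])
  using main_lemma by simp

end
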